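(* ODH satisfies the lower quota. Let $\sigma=\langle\mathcal V,\mathcal C,S,B\rangle$ be an approval-based multi-winner election, let $\mathcal A\subseteq\mathcal C$, and let $\{y_1,\dots,y_n\}\subseteq2^{\mathcal C}$ be such that: - $\mathcal A\subseteq y_j$ for all $j=1,\dots,n$; - with $q=\frac{\sum_{j=1}^nB(y_j)}{|\mathcal V|}S$, one has $|\mathcal A|\ge\lfloor q\rfloor$. Then every output $W$ of ODH on $\sigma$ (under any tie-breaking) satisfies $\big|W\cap\bigcup_{j=1}^ny_j\big|\ge\lfloor q\rfloor$.
   Context: An approval-based multi-winner election is a tuple $\sigma=\langle \mathcal V,\mathcal C,S,B\rangle$, where $\mathcal V$ is a finite set of agents, $\mathcal C$ is a finite set of candidates, $1\le S\le|\mathcal C|$ is an integer, and $B:2^{\mathcal C}\to\mathbb N$ gives, for each $\mathcal A\subseteq\mathcal C$, the number $B(\mathcal A)$ of agents whose ballot is exactly $\mathcal A$ (with $\sum_{\mathcal A}B(\mathcal A)\le|\mathcal V|$). For a non-empty $\mathcal A\subseteq\mathcal C$, the family $\mathfrak F_{\sigma,\mathcal A}$ is the set of all $F:2^{\mathcal C}\times\mathcal A\to\mathbb R$ such that: - $F(y,c)\ge0$ for all $y$ and $c$; - $F(y,c)=0$ if $c\notin y$; - $\sum_{c\in\mathcal A\cap y}F(y,c)=B(y)$ whenever $y\cap\mathcal A\neq\emptyset$. We write $\mathrm{Supp}_F(c)=\sum_yF(y,c)$ and $\mathrm{maxMin}(\sigma,\mathcal A)=\sup_{F\in\mathfrak F_{\sigma,\mathcal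 A}}\min_{c\in\mathcal A}\mathrm{Supp}_F(c)$. We also write $\mathfrak F^{\mathrm{opt}}_{\sigma,\mathcal A}=\{F\in\mathfrak F_{\sigma,\mathcal A}:\mathrm{Supp}_F(c)\ge\mathrm{maxMin}(\sigma,\mathcal A)\ \forall c\in\mathcal A\}$. The Open D'Hondt (ODH) rule proceeds as follows. Start with $\mathcal C_e=\emptyset$ and repeat $S$ times: - for each $c\in\mathcal C\setminus\mathcal C_e$, choose any $F\in\mathfrak F^{\mathrm{opt}}_{\sigma,\mathcal C_e\cup\{c\}}$ and set $s_c=\mathrm{Supp}_F(c)$; - then add to $\mathcal C_e$ some $w$ maximizing $s_w$ (ties broken arbitrarily). Finally, output $\mathcal C_e$. *)

theory Defs
  imports Complex_Main
begin

text \<open>An approval-based multi-winner election: agents V, candidates C, committee size S,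
  ballot counts B (B y = number of agents whose ballot is exactly y; zero outside Pow C).\<close>
definition election :: "'v set \<Rightarrow> 'c set \<Rightarrow> nat \<Rightarrow> ('c set \<Rightarrow> nat) \<Rightarrow> bool" where
  "election V C S B \<longleftrightarrow> finite V \<and> finite C \<and> 1 \<le> S \<and> S \<le> card C
     \<and> (\<forall>y. \<not> y \<subseteq> C \<longrightarrow> B y = 0)
     \<and> (\<Sum>y\<in>Pow C. B y) \<le> card V"

definition feasible :: "'c set \<Rightarrow> ('c set \<Rightarrow> nat) \<Rightarrow> 'c set \<Rightarrow> ('c set \<Rightarrow> 'c \<Rightarrow> real) \<Rightarrow> bool" where
  "feasible C B A F \<longleftrightarrow>
     (\<forall>y\<in>Pow C. \<forall>c\<in>A. 0 \<le> F y c \<and> (c \<notin> y \<longrightarrow> F y c = 0))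
   \<and> (\<forall>y\<in>Pow C. y \<inter> A \<noteq> {} \<longrightarrow> (\<Sum>c\<in>A \<inter> y. F y c) = real (B y))"

definition supp :: "'c set \<Rightarrow> ('c set \<Rightarrow> 'c \<Rightarrow> real) \<Rightarrow> 'c \<Rightarrow> real" where
  "supp C F c = (\<Sum>y\<in>Pow C. F y c)"

definition maxMin :: "'c set \<Rightarrow> ('c set \<Rightarrow> nat) \<Rightarrow> 'c set \<Rightarrow> real" where
  "maxMin C B A = Sup ((\<lambda>F. Min (supp C F ` A)) ` {F. feasible C B A F})"

definition opt :: "'c set \<Rightarrow> ('c set \<Rightarrow> nat) \<Rightarrow> 'c set \<Rightarrow> ('c set \<Rightarrow> 'c \<Rightarrow> real) set" where
  "opt C B A = {F. feasible C B A F \<and> (\<forall>c\<in>A. maxMin C B A \<le> supp C F c)}"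

definition odh_step :: "'c set \<Rightarrow> ('c set \<Rightarrow> nat) \<Rightarrow> 'c set \<Rightarrow> 'c \<Rightarrow> bool" where
  "odh_step C B Ce w \<longleftrightarrow> w \<in> C - Ce \<and>
     (\<exists>s :: 'c \<Rightarrow> real.
        (\<forall>c\<in>C - Ce. \<exists>F\<in>opt C B (Ce \<union> {c}). s c = supp C F c)
      \<and> (\<forall>c\<in>C - Ce. s c \<le> s w))"

inductive odh_run :: "'c set \<Rightarrow> ('c set \<Rightarrow> nat) \<Rightarrow> nat \<Rightarrow> 'c set \<Rightarrow> bool"
  for C B where
  start: "odh_run C B 0 {}"
| step: "odh_run C B k Ce \<Longrightarrow> odh_step C B Ce w \<Longrightarrow> odh_run C B (Suc k) (insert w Ce)"

definition odh_output :: "'c set \<Rightarrow> nat \<Rightarrow> ('c set \<Rightarrow> nat) \<Rightarrow> 'c set \<Rightarrow> bool" where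
  "odh_output C S B W \<longleftrightarrow> odh_run C B S W"

end

theory Submission
  imports Defs
begin


lemma feas_sum_le_B:
  assumes "feasible C B A F" "y \<in> Pow C" "finite A"
  shows "(\<Sum>c\<in>A. F y c) \<le> real (B y)"
proof -
  have z: "\<forall>c\<in>A - A \<inter> y. F y c = 0" using assms(1,2) unfolding feasible_def by blast
  have "(\<Sum>c\<in>A. F y c) = (\<Sum>c\<in>A \<inter> y. F y c)"
    using assms(3) z by (intro sum.mono_neutral_right) auto
  also have "\<dots> \<le> real (B y)"
  proof (cases "y \<inter> A = {}")
    case True then have "A \<inter> y = {}" by blast
    then show ?thesis by simp
  next
    case False then show ?thesis using assms(1,2) unfolding feasible_def by simp
  qed
  finally show ?thesis .
qed

lemma feas_nonneg:
  assumes "feasible C B A F" "y \<in> Pow C" "c \<in> A"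
  shows "0 \<le> F y c"
  using assms unfolding feasible_def by blast

lemma feas_le_B1:
  assumes "feasible C B A F" "y \<in> Pow C" "finite A" "c \<in> A"
  shows "F y c \<le> real (B y)"
proof -
  have "F y c \<le> (\<Sum>c\<in>A. F y c)"
    using assms by (intro member_le_sum) (auto intro: feas_nonneg)
  then show ?thesis using feas_sum_le_B[OF assms(1-3)] by linarith
qed

lemma supp_nonneg:
  assumes "feasible C B A F" "c \<in> A"
  shows "0 \<le> supp C F c"
  unfolding supp_def using assms by (intro sum_nonneg) (auto intro: feas_nonneg)

lemma maxMin_ge:
  assumes "finite C" "feasible C B A F" "finite A" "A \<noteq> {}"
  shows "Min (supp C F ` A) \<le> maxMin C B A"
  unfolding maxMin_def
proof (rule cSup_upper)
  show "Min (supp C F ` A) \<in> (\<lambda>F. Min (supp C F ` A)) ` {F. feasible C B A F}"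
    using assms by blast
  show "bdd_above ((\<lambda>F. Min (supp C F ` A)) ` {F. feasible C B A F})"
  proof (rule bdd_aboveI[where M = "\<Sum>y\<in>Pow C. real (B y)"], clarify)
    fix G assume g: "feasible C B A G"
    obtain c where c: "c \<in> A" using assms(4) by blast
    have "Min (supp C G ` A) \<le> supp C G c" using c assms(3) by simp
    also have "\<dots> \<le> (\<Sum>y\<in>Pow C. real (B y))"
      unfolding supp_def by (rule sum_mono) (use feas_le_B1[OF g _ assms(3) c] in auto)
    finally show "Min (supp C G ` A) \<le> (\<Sum>y\<in>Pow C. real (B y))" .
  qed
qed

lemma maxMin_geI:
  assumes "finite C" "feasible C B A F" "finite A" "A \<noteq> {}" "\<forall>c\<in>A. \<theta> \<le> supp C F c"
  shows "\<theta> \<le> maxMin C B A"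
proof -
  have "\<theta> \<le> Min (supp C F ` A)" using assms by simp
  then show ?thesis using maxMin_ge[OF assms(1-4)] by linarith
qed

lemma feas_mix:
  assumes g1: "feasible C B A G1" and g2: "feasible C B A G2" and t: "0 \<le> t" "t \<le> 1"
  shows "feasible C B A (\<lambda>y c. t * G1 y c + (1 - t) * G2 y c)"
  unfolding feasible_def
proof (intro conjI ballI impI)
  fix y c assume y: "y \<in> Pow C" and c: "c \<in> A"
  have "0 \<le> G1 y c" "0 \<le> G2 y c" using g1 g2 y c unfolding feasible_def by auto
  then show "0 \<le> t * G1 y c + (1 - t) * G2 y c" using t by simp
  assume "c \<notin> y"
  then have "G1 y c = 0" "G2 y c = 0" using g1 g2 y c unfolding feasible_def by auto
  then show "t * G1 y c + (1 - t) * G2 y c = 0" by simp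
next
  fix y assume y: "y \<in> Pow C" and ne: "y \<inter> A \<noteq> {}"
  have "sum (G1 y) (A \<inter> y) = real (B y)" "sum (G2 y) (A \<inter> y) = real (B y)"
    using g1 g2 y ne unfolding feasible_def by auto
  then show "(\<Sum>c\<in>A \<inter> y. t * G1 y c + (1 - t) * G2 y c) = real (B y)"
  proof -
    have "(\<Sum>c\<in>A \<inter> y. t * G1 y c + (1 - t) * G2 y c) = t * sum (G1 y) (A \<inter> y) + (1 - t) * sum (G2 y) (A \<inter> y)"
      by (simp add: sum.distrib sum_distrib_left)
    with \<open>sum (G1 y) (A \<inter> y) = real (B y)\<close> \<open>sum (G2 y) (A \<inter> y) = real (B y)\<close>
    show ?thesis by (simp add: algebra_simps)
  qed
qed

lemma supp_mix:
  "supp C (\<lambda>y c. t * G1 y c + (1 - t) * G2 y c) c = t * supp C G1 c + (1 - t) * supp C G2 c"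
  unfolding supp_def by (simp add: sum.distrib sum_distrib_left)



lemma add_a:
  fixes \<theta> :: real
  assumes finC: "finite C" and XC: "X \<subseteq> C" and aC: "a \<in> C" and aX: "a \<notin> X"
    and YC: "Y \<subseteq> Pow C" and aY: "\<forall>y\<in>Y. a \<in> y"
    and G: "feasible C B X G" and Gs: "\<forall>c\<in>X. \<theta> \<le> supp C G c" and th: "0 < \<theta>"
    and N: "(real (card (X \<inter> \<Union>Y)) + 1) * \<theta> \<le> (\<Sum>y\<in>Y. real (B y))"
  shows "\<exists>H. feasible C B (insert a X) H \<and> (\<forall>c\<in>insert a X. \<theta> \<le> supp C H c)"
proof -
  have finX: "finite X" using finC XC finite_subset by blast
  have Gnn: "\<And>y d. y \<in> Pow C \<Longrightarrow> d \<in> X \<Longrightarrow> 0 \<le> G y d" by (rule feas_nonneg[OF G])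
  have G0: "\<And>y d. y \<in> Pow C \<Longrightarrow> d \<in> X \<Longrightarrow> d \<notin> y \<Longrightarrow> G y d = 0"
    using G unfolding feasible_def by blast
  define yc where "yc d = (\<Sum>y\<in>Y. G y d)" for d
  define lam where "lam d = (if yc d \<le> \<theta> then 1 else \<theta> / yc d)" for d
  define H where "H y c = (if c = a then (if y \<in> Y then real (B y) - (\<Sum>d\<in>X. lam d * G y d)
        else if a \<in> y \<and> y \<inter> X = {} then real (B y) else 0)
      else (if y \<in> Y then lam c * G y c else G y c))" for y c
  have lam01: "0 \<le> lam d \<and> lam d \<le> 1" for d
    using th by (auto simp: lam_def field_simps)
  have lamyc: "lam d * yc d = min (yc d) \<theta>" for d
    using th by (auto simp: lam_def)
  have ycnn: "d \<in> X \<Longrightarrow> 0 \<le> yc d" for d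
    unfolding yc_def using YC by (intro sum_nonneg) (auto intro: Gnn)
  have sumlam: "(\<Sum>d\<in>X. lam d * G y d) \<le> real (B y)" if y: "y \<in> Pow C" for y
  proof -
    have "(\<Sum>d\<in>X. lam d * G y d) \<le> (\<Sum>d\<in>X. G y d)"
      by (intro sum_mono) (use lam01 Gnn[OF y] in \<open>auto intro: mult_left_le_one_le\<close>)
    also have "\<dots> \<le> real (B y)" using feas_sum_le_B[OF G y finX] .
    finally show ?thesis .
  qed
  have feasH: "feasible C B (insert a X) H"
    unfolding feasible_def
  proof (intro conjI ballI impI)
    fix y c assume y: "y \<in> Pow C" and c: "c \<in> insert a X"
    show "0 \<le> H y c"
    proof (cases "c = a")
      case True then show ?thesis using sumlam[OF y] by (auto simp: H_def)
    next
      case False then have "c \<in> X" using c by auto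
      then show ?thesis using False Gnn[OF y] lam01 by (auto simp: H_def)
    qed
    assume cy: "c \<notin> y"
    show "H y c = 0"
    proof (cases "c = a")
      case True then show ?thesis using aY cy by (auto simp: H_def)
    next
      case False then have "c \<in> X" using c by auto
      then show ?thesis using False G0[OF y] cy by (auto simp: H_def)
    qed
  next
    fix y assume y: "y \<in> Pow C" and ne: "y \<inter> insert a X \<noteq> {}"
    have zX: "(\<Sum>c\<in>X \<inter> y. f c) = (\<Sum>c\<in>X. f c)" if "\<forall>c\<in>X. c \<notin> y \<longrightarrow> f c = 0" for f :: "'a \<Rightarrow> real"
      using finX that by (intro sum.mono_neutral_left) auto
    show "(\<Sum>c\<in>insert a X \<inter> y. H y c) = real (B y)"
    proof (cases "y \<in> Y")
      case True
      then have ay: "a \<in> y" using aY by auto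
      have "insert a X \<inter> y = insert a (X \<inter> y)" using ay by auto
      then have "(\<Sum>c\<in>insert a X \<inter> y. H y c) = H y a + (\<Sum>c\<in>X \<inter> y. H y c)"
        using finX aX by simp
      also have "(\<Sum>c\<in>X \<inter> y. H y c) = (\<Sum>c\<in>X \<inter> y. lam c * G y c)"
        using aX True by (intro sum.cong) (auto simp: H_def)
      also have "\<dots> = (\<Sum>c\<in>X. lam c * G y c)"
        by (rule zX) (use G0[OF y] in auto)
      finally show ?thesis using True by (simp add: H_def)
    next
      case False
      show ?thesis
      proof (cases "y \<inter> X = {}")
        case True
        then have ay: "a \<in> y" using ne by auto
        have e: "insert a X \<inter> y = {a}" using ay True by auto
        have "(\<Sum>c\<in>insert a X \<inter> y. H y c) = H y a" unfolding e by simp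
        then show ?thesis using False True ay by (simp add: H_def)
      next
        case XY: False
        have "(\<Sum>c\<in>insert a X \<inter> y. H y c) = (\<Sum>c\<in>X \<inter> y. H y c)"
        proof (cases "a \<in> y")
          case True
          then have "insert a X \<inter> y = insert a (X \<inter> y)" by auto
          then show ?thesis using finX aX False XY by (simp add: H_def)
        next
          case False then have "insert a X \<inter> y = X \<inter> y" by auto
          then show ?thesis by simp
        qed
        also have "\<dots> = (\<Sum>c\<in>X \<inter> y. G y c)"
          using aX False by (intro sum.cong) (auto simp: H_def)
        also have "\<dots> = real (B y)" using G y XY unfolding feasible_def by (auto simp: Int_commute)
        finally show ?thesis .
      qed
    qed
  qed
  have splitsum: "(\<Sum>y\<in>Pow C. f y) = (\<Sum>y\<in>Y. f y) + (\<Sum>y\<in>Pow C - Y. f y)" for f :: "'a set \<Rightarrow> real"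
    using sum.subset_diff[OF YC, of f] finC by (simp add: add.commute)
  have suppX: "\<theta> \<le> supp C H c" if c: "c \<in> X" for c
  proof -
    have ca: "c \<noteq> a" using c aX by auto
    have "supp C H c = (\<Sum>y\<in>Y. lam c * G y c) + (\<Sum>y\<in>Pow C - Y. G y c)"
      unfolding supp_def splitsum using ca by (simp add: H_def)
    also have "(\<Sum>y\<in>Y. lam c * G y c) = min (yc c) \<theta>"
      by (simp add: sum_distrib_left[symmetric] yc_def[symmetric] lamyc)
    finally have e1: "supp C H c = min (yc c) \<theta> + (\<Sum>y\<in>Pow C - Y. G y c)" .
    have e2: "supp C G c = yc c + (\<Sum>y\<in>Pow C - Y. G y c)"
      unfolding supp_def splitsum yc_def ..
    have "0 \<le> (\<Sum>y\<in>Pow C - Y. G y c)" by (intro sum_nonneg) (use Gnn c in auto)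
    then show ?thesis using e1 e2 Gs c by (auto simp: min_def)
  qed
  have suppa: "\<theta> \<le> supp C H a"
  proof -
    have Hann: "0 \<le> H y a" if "y \<in> Pow C" for y using feasH that unfolding feasible_def by auto
    have "supp C H a = (\<Sum>y\<in>Y. H y a) + (\<Sum>y\<in>Pow C - Y. H y a)"
      unfolding supp_def splitsum ..
    moreover have "0 \<le> (\<Sum>y\<in>Pow C - Y. H y a)" by (intro sum_nonneg) (use Hann in auto)
    moreover have "(\<Sum>y\<in>Y. H y a) = (\<Sum>y\<in>Y. real (B y)) - (\<Sum>d\<in>X. lam d * yc d)"
    proof -
      have "(\<Sum>y\<in>Y. H y a) = (\<Sum>y\<in>Y. real (B y) - (\<Sum>d\<in>X. lam d * G y d))"
        by (intro sum.cong) (auto simp: H_def)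
      also have "\<dots> = (\<Sum>y\<in>Y. real (B y)) - (\<Sum>y\<in>Y. \<Sum>d\<in>X. lam d * G y d)"
        by (simp add: sum_subtractf)
      also have "(\<Sum>y\<in>Y. \<Sum>d\<in>X. lam d * G y d) = (\<Sum>d\<in>X. lam d * yc d)"
        by (subst sum.swap) (simp add: yc_def sum_distrib_left)
      finally show ?thesis .
    qed
    moreover have "(\<Sum>d\<in>X. lam d * yc d) \<le> real (card (X \<inter> \<Union>Y)) * \<theta>"
    proof -
      have "(\<Sum>d\<in>X. lam d * yc d) = (\<Sum>d\<in>X \<inter> \<Union>Y. lam d * yc d)"
      proof (rule sum.mono_neutral_right)
        show "finite X" by fact
        show "X \<inter> \<Union>Y \<subseteq> X" by auto
        show "\<forall>i\<in>X - X \<inter> \<Union>Y. lam i * yc i = 0"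
        proof
          fix d assume d: "d \<in> X - X \<inter> \<Union>Y"
          have "yc d = 0" unfolding yc_def
            by (rule sum.neutral) (use d YC G0 in blast)
          then show "lam d * yc d = 0" by simp
        qed
      qed
      also have "\<dots> \<le> (\<Sum>d\<in>X \<inter> \<Union>Y. \<theta>)" by (intro sum_mono) (simp add: lamyc)
      also have "\<dots> = real (card (X \<inter> \<Union>Y)) * \<theta>" by simp
      finally show ?thesis .
    qed
    ultimately show ?thesis using N by (simp add: algebra_simps)
  qed
  show ?thesis using feasH suppX suppa by blast
qed



lemma add_w:
  fixes \<theta> :: real
  assumes finC: "finite C" and XC: "X \<subseteq> C" and wX: "w \<notin> X"
    and G: "feasible C B X G" and Gs: "\<forall>c\<in>X. \<theta> \<le> supp C G c" and th: "0 < \<theta>"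
    and F: "F \<in> opt C B (insert w X)" and Fw: "\<theta> \<le> supp C F w"
  shows "\<theta> \<le> maxMin C B (insert w X)"
proof (rule ccontr)
  assume "\<not> \<theta> \<le> maxMin C B (insert w X)"
  then have lt: "maxMin C B (insert w X) < \<theta>" by simp
  define \<mu> where "\<mu> = maxMin C B (insert w X)"
  have finX: "finite X" using finC XC finite_subset by blast
  have Ff: "feasible C B (insert w X) F" and Fs: "\<forall>c\<in>insert w X. \<mu> \<le> supp C F c"
    using F unfolding opt_def \<mu>_def by auto
  have mu0: "0 \<le> \<mu>"
  proof -
    have "0 \<le> Min (supp C F ` insert w X)"
      using finX supp_nonneg[OF Ff] by simp
    also have "\<dots> \<le> \<mu>" unfolding \<mu>_def using maxMin_ge[OF finC Ff] finX by simp
    finally show ?thesis .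
  qed
  define G' where "G' y c = (if c = w then (if w \<in> y \<and> y \<inter> X = {} then real (B y) else 0) else G y c)" for y c
  have feasG': "feasible C B (insert w X) G'"
    unfolding feasible_def
  proof (intro conjI ballI impI)
    fix y c assume y: "y \<in> Pow C" and c: "c \<in> insert w X"
    show "0 \<le> G' y c" using G y c wX unfolding G'_def feasible_def by auto
    assume "c \<notin> y" then show "G' y c = 0" using G y c wX unfolding G'_def feasible_def by auto
  next
    fix y assume y: "y \<in> Pow C" and ne: "y \<inter> insert w X \<noteq> {}"
    show "(\<Sum>c\<in>insert w X \<inter> y. G' y c) = real (B y)"
    proof (cases "y \<inter> X = {}")
      case True
      then have "w \<in> y" using ne by auto
      then have e: "insert w X \<inter> y = {w}" using True by auto
      have "(\<Sum>c\<in>insert w X \<inter> y. G' y c) = G' y w" unfolding e by simp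
      then show ?thesis using True \<open>w \<in> y\<close> by (simp add: G'_def)
    next
      case False
      have "(\<Sum>c\<in>insert w X \<inter> y. G' y c) = (\<Sum>c\<in>X \<inter> y. G' y c)"
      proof (cases "w \<in> y")
        case True
        then have "insert w X \<inter> y = insert w (X \<inter> y)" by auto
        then show ?thesis using finX wX False by (simp add: G'_def)
      next
        case False then have "insert w X \<inter> y = X \<inter> y" by auto
        then show ?thesis by simp
      qed
      also have "\<dots> = (\<Sum>c\<in>X \<inter> y. G y c)" using wX by (intro sum.cong) (auto simp: G'_def)
      also have "\<dots> = real (B y)" using G y False unfolding feasible_def by (auto simp: Int_commute)
      finally show ?thesis .
    qed
  qed
  define t where "t = (\<theta> - \<mu>) / (2 * \<theta>)"
  have t0: "0 < t" using lt th by (simp add: t_def \<mu>_def)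
  have t1: "t \<le> 1" using mu0 th lt by (simp add: t_def \<mu>_def field_simps)
  define H where "H y c = t * G' y c + (1 - t) * F y c" for y c
  have feasH: "feasible C B (insert w X) H"
    unfolding H_def by (rule feas_mix[OF feasG' Ff]) (use t0 t1 in auto)
  have gt: "\<mu> < supp C H c" if c: "c \<in> insert w X" for c
  proof (cases "c = w")
    case True
    have "0 \<le> supp C G' w" using supp_nonneg[OF feasG'] by simp
    then have "(1 - t) * \<theta> \<le> supp C H w"
      unfolding H_def supp_mix using Fw t0 t1
      by (smt (verit) mult_left_mono mult_nonneg_nonneg)
    moreover have "\<mu> < (1 - t) * \<theta>"
      using lt th unfolding t_def \<mu>_def by (simp add: field_simps)
    ultimately show ?thesis using True by simp
  next
    case False
    then have cX: "c \<in> X" using c by auto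
    have "supp C G' c = supp C G c" using False unfolding supp_def G'_def by simp
    then have "t * \<theta> + (1 - t) * \<mu> \<le> supp C H c"
      unfolding H_def supp_mix using Gs cX Fs c t0 t1
      by (smt (verit) mult_left_mono)
    moreover have "\<mu> < t * \<theta> + (1 - t) * \<mu>"
    proof -
      have "t * \<theta> + (1 - t) * \<mu> = \<mu> + t * (\<theta> - \<mu>)" by (simp add: algebra_simps)
      moreover have "0 < t * (\<theta> - \<mu>)" using t0 lt \<mu>_def by simp
      ultimately show ?thesis by simp
    qed
    ultimately show ?thesis by simp
  qed
  have "\<mu> < Min (supp C H ` insert w X)" using gt finX by simp
  also have "\<dots> \<le> \<mu>" unfolding \<mu>_def using maxMin_ge[OF finC feasH] finX by simp
  finally show False by simp
qed

lemma run_basic: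
  assumes "odh_run C B k Ce"
  shows "Ce \<subseteq> C \<and> finite Ce \<and> card Ce = k"
  using assms
proof (induction rule: odh_run.induct)
  case start then show ?case by simp
next
  case (step k Ce w)
  then have "w \<in> C - Ce" unfolding odh_step_def by simp
  then show ?case using step by auto
qed



lemma run_inv:
  fixes \<theta> :: real
  assumes finC: "finite C" and YC: "Y \<subseteq> Pow C" and aC: "a \<in> C" and aY: "\<forall>y\<in>Y. a \<in> y"
    and th: "0 < \<theta>" and N: "(real m + 1) * \<theta> \<le> (\<Sum>y\<in>Y. real (B y))"
  shows "odh_run C B k Ce \<Longrightarrow> a \<notin> Ce \<Longrightarrow> card (Ce \<inter> \<Union>Y) \<le> m
    \<Longrightarrow> \<exists>G. feasible C B Ce G \<and> (\<forall>c\<in>Ce. \<theta> \<le> supp C G c)"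
proof (induction rule: odh_run.induct)
  case start
  have "feasible C B {} (\<lambda>_ _. 0)" unfolding feasible_def by simp
  then show ?case by blast
next
  case (step k Ce w)
  have aCe: "a \<notin> Ce" using step.prems by simp
  have bas: "Ce \<subseteq> C" "finite Ce" using run_basic[OF step.hyps(1)] by auto
  have "card (Ce \<inter> \<Union>Y) \<le> card (insert w Ce \<inter> \<Union>Y)"
    by (rule card_mono) (use bas in auto)
  then have cm: "card (Ce \<inter> \<Union>Y) \<le> m" using step.prems by simp
  obtain G where G: "feasible C B Ce G" "\<forall>c\<in>Ce. \<theta> \<le> supp C G c"
    using step.IH aCe cm by blast
  have N': "(real (card (Ce \<inter> \<Union>Y)) + 1) * \<theta> \<le> (\<Sum>y\<in>Y. real (B y))"
  proof -
    have "(real (card (Ce \<inter> \<Union>Y)) + 1) * \<theta> \<le> (real m + 1) * \<theta>"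
      using cm th by (intro mult_right_mono) auto
    then show ?thesis using N by linarith
  qed
  obtain H where H: "feasible C B (insert a Ce) H" "\<forall>c\<in>insert a Ce. \<theta> \<le> supp C H c"
    using add_a[OF finC bas(1) aC aCe YC aY G th N'] by blast
  have mma: "\<theta> \<le> maxMin C B (insert a Ce)"
    by (rule maxMin_geI[OF finC H(1) _ _ H(2)]) (use bas in auto)
  from step.hyps(2) obtain s where wC: "w \<in> C - Ce"
    and s1: "\<forall>c\<in>C - Ce. \<exists>F\<in>opt C B (Ce \<union> {c}). s c = supp C F c"
    and s2: "\<forall>c\<in>C - Ce. s c \<le> s w"
    unfolding odh_step_def by blast
  obtain Fa where Fa: "Fa \<in> opt C B (insert a Ce)" "s a = supp C Fa a"
    using s1 aC aCe by auto
  have "maxMin C B (insert a Ce) \<le> supp C Fa a" using Fa(1) unfolding opt_def by auto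
  then have sa: "\<theta> \<le> s a" using mma Fa(2) by linarith
  have "s a \<le> s w" using s2 aC aCe by auto
  obtain Fw where Fw: "Fw \<in> opt C B (insert w Ce)" "s w = supp C Fw w"
    using s1 wC by auto
  have "\<theta> \<le> supp C Fw w" using sa \<open>s a \<le> s w\<close> Fw(2) by linarith
  have "w \<notin> Ce" using wC by auto
  have mmw: "\<theta> \<le> maxMin C B (insert w Ce)"
    by (rule add_w[OF finC bas(1) \<open>w \<notin> Ce\<close> G(1) G(2) th Fw(1) \<open>\<theta> \<le> supp C Fw w\<close>])
  have "feasible C B (insert w Ce) Fw" "\<forall>c\<in>insert w Ce. \<theta> \<le> supp C Fw c"
    using Fw(1) mmw unfolding opt_def by fastforce+
  then show ?case by blast
qed


theorem theorem5:
  fixes V :: "'v set" and C :: "'c set" and S :: nat and B :: "'c set \<Rightarrow> nat"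
    and A :: "'c set" and Y :: "'c set set" and W :: "'c set"
  assumes elec: "election V C S B"
    and AC: "A \<subseteq> C"
    and YC: "Y \<subseteq> Pow C"
    and Ay: "\<forall>y\<in>Y. A \<subseteq> y"
    and quota: "real (card A) \<ge> of_int \<lfloor>(\<Sum>y\<in>Y. real (B y)) / real (card V) * real S\<rfloor>"
    and out: "odh_output C S B W"
  shows "real (card (W \<inter> \<Union>Y)) \<ge> of_int \<lfloor>(\<Sum>y\<in>Y. real (B y)) / real (card V) * real S\<rfloor>"
proof (rule ccontr)
  define N where "N = (\<Sum>y\<in>Y. real (B y))"
  define nV where "nV = real (card V)"
  define q where "q = \<lfloor>N / nV * real S\<rfloor>"
  define U where "U = \<Union>Y"
  define m where "m = card (W \<inter> U)"
  assume "\<not> ?thesis"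
  then have mq: "real m < of_int q" unfolding m_def U_def q_def N_def nV_def by simp
  have finC: "finite C" and S1: "1 \<le> S" and SC: "S \<le> card C"
    and B0: "\<forall>y. \<not> y \<subseteq> C \<longrightarrow> B y = 0" and BV: "(\<Sum>y\<in>Pow C. B y) \<le> card V"
    using elec unfolding election_def by auto
  have run: "odh_run C B S W" using out unfolding odh_output_def .
  have Wb: "W \<subseteq> C" "finite W" "card W = S" using run_basic[OF run] by auto
  have i1: "int m < q" using mq by (metis of_int_less_iff of_int_of_nat_eq)
  then have "int m + 1 \<le> q" by simp
  then have "real_of_int (int m + 1) \<le> of_int q" by (simp only: of_int_le_iff)
  then have m1q: "real m + 1 \<le> of_int q" by simp
  have qle: "of_int q \<le> N / nV * real S" unfolding q_def by simp
  have nV0: "0 < nV"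
  proof (rule ccontr)
    assume "\<not> 0 < nV" then have "nV = 0" unfolding nV_def by simp
    then have "q = 0" unfolding q_def by simp
    then show False using mq by simp
  qed
  define \<theta> where "\<theta> = nV / real S"
  have th: "0 < \<theta>" using nV0 S1 unfolding \<theta>_def by simp
  have Nth: "(real m + 1) * \<theta> \<le> N"
  proof -
    have "(real m + 1) * \<theta> \<le> (N / nV * real S) * \<theta>"
      using m1q qle th by (intro mult_right_mono) auto
    also have "\<dots> = N" unfolding \<theta>_def using nV0 S1 by (simp add: field_simps)
    finally show ?thesis .
  qed
  have Yne: "Y \<noteq> {}"
  proof
    assume "Y = {}" then have "N = 0" unfolding N_def by simp
    then have "q = 0" unfolding q_def by simp
    then show False using mq by simp
  qed
  have AU: "A \<subseteq> U" using Yne Ay unfolding U_def by blast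
  have "card (W \<inter> A) \<le> m" unfolding m_def by (rule card_mono) (use Wb AU in auto)
  moreover have "real m < real (card A)" using mq quota unfolding q_def N_def nV_def by simp
  ultimately have "card (W \<inter> A) < card A" by simp
  have "\<not> A \<subseteq> W"
  proof
    assume "A \<subseteq> W" then have "W \<inter> A = A" by blast
    with \<open>card (W \<inter> A) < card A\<close> show False by simp
  qed
  then obtain a where a: "a \<in> A" "a \<notin> W" by blast
  have aC: "a \<in> C" using a AC by auto
  have aY: "\<forall>y\<in>Y. a \<in> y" using a Ay by auto
  obtain G where G: "feasible C B W G" "\<forall>c\<in>W. \<theta> \<le> supp C G c"
    using run_inv[OF finC YC aC aY th Nth[unfolded N_def] run a(2)] m_def U_def by auto
  obtain H where H: "feasible C B (insert a W) H" "\<forall>c\<in>insert a W. \<theta> \<le> supp C H c"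
    using add_a[OF finC Wb(1) aC a(2) YC aY G th] Nth m_def U_def N_def by auto
  have fin: "finite (insert a W)" using Wb by simp
  have "real (card (insert a W)) * \<theta> \<le> (\<Sum>c\<in>insert a W. supp C H c)"
  proof -
    have "(\<Sum>c\<in>insert a W. \<theta>) \<le> (\<Sum>c\<in>insert a W. supp C H c)"
      by (rule sum_mono) (use H(2) in blast)
    then show ?thesis by simp
  qed
  also have "\<dots> = (\<Sum>y\<in>Pow C. \<Sum>c\<in>insert a W. H y c)"
    unfolding supp_def by (rule sum.swap)
  also have "\<dots> \<le> (\<Sum>y\<in>Pow C. real (B y))"
    by (rule sum_mono) (rule feas_sum_le_B[OF H(1) _ fin])
  also have "\<dots> = real (\<Sum>y\<in>Pow C. B y)" by (simp add: of_nat_sum)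
  also have "\<dots> \<le> nV" unfolding nV_def using BV by (simp only: of_nat_le_iff)
  finally have "real (Suc S) * \<theta> \<le> nV" using Wb a by simp
  moreover have "real (Suc S) * \<theta> = nV + \<theta>" unfolding \<theta>_def using S1 by (simp add: field_simps)
  ultimately show False using th by simp
qed


end
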